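(* Let $V_1,\dots,V_t$ be pairwise disjoint finite sets with $|V_i|\ge2$ for all $i$. For any integer $\ell\ge2$, the number of subsets $S\subseteq\bigcup_{i\in[t]}V_i$ with $|S|=\ell$ and $|S\cap V_i|\ne1$ for every $i\in[t]$ is at most $$\Big(\frac{20}{\ell}\big(|V_1|^2+\dots+|V_t|^2\big)\Big)^{\ell/2}.$$ *)

theory Defs
  imports Complex_Main
begin

end

theory Submission
  imports Defs
begin

lemma exp_aux: fixes y :: real assumes "y \<ge> 0" shows "exp y - y \<le> exp (y^2)"
proof (cases "y \<le> 1")
  case True
  have "exp y \<le> 1 + y + y^2" using exp_bound[OF assms True] .
  moreover have "1 + y^2 \<le> exp (y^2)" using exp_ge_add_one_self[of "y^2"] by simp
  ultimately show ?thesis by linarith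
next
  case False
  then have "y \<le> y^2" by (simp add: power2_eq_square)
  then have "exp y \<le> exp (y^2)" by simp
  then show ?thesis using assms by linarith
qed

lemma pow_sum: fixes x :: real assumes "finite V"
  shows "(\<Sum>T\<in>Pow V. x ^ card T) = (1 + x) ^ card V"
  using assms
proof (induction V rule: finite_induct)
  case empty then show ?case by simp
next
  case (insert a F)
  have disj: "Pow F \<inter> insert a ` Pow F = {}" using insert by auto
  have inj: "inj_on (insert a) (Pow F)" using insert
    by (smt (verit, ccfv_SIG) PowD inj_onI insert_ident subset_iff)
  have c: "\<And>T. T \<in> Pow F \<Longrightarrow> card (insert a T) = Suc (card T)"
    using insert by (meson PowD card_insert_disjoint finite_subset subsetD)
  have "(\<Sum>T\<in>Pow (insert a F). x ^ card T) = (\<Sum>T\<in>Pow F. x ^ card T) + (\<Sum>T\<in>insert a ` Pow F. x ^ card T)"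
    unfolding Pow_insert using insert disj by (simp add: sum.union_disjoint)
  also have "(\<Sum>T\<in>insert a ` Pow F. x ^ card T) = (\<Sum>T\<in>Pow F. x * x ^ card T)"
    using inj c by (simp add: sum.reindex)
  also have "\<dots> = x * (1+x)^card F" using insert by (simp add: sum_distrib_left[symmetric])
  finally show ?case using insert by (simp add: algebra_simps)
qed

lemma block_sum: fixes x :: real assumes "finite V" "x \<ge> 0"
  shows "(\<Sum>T\<in>{T. T \<subseteq> V \<and> card T \<noteq> 1}. x ^ card T) \<le> exp (x^2 * real (card V)^2)"
proof -
  let ?A = "{T. T \<subseteq> V \<and> card T \<noteq> 1}" and ?B = "{T. T \<subseteq> V \<and> card T = 1}"
  have P: "Pow V = ?A \<union> ?B" by auto
  have fA: "finite ?A" "finite ?B" using assms(1) by auto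
  have "(\<Sum>T\<in>Pow V. x ^ card T) = (\<Sum>T\<in>?A. x ^ card T) + (\<Sum>T\<in>?B. x ^ card T)"
    unfolding P by (rule sum.union_disjoint) (use fA in auto)
  moreover have "(\<Sum>T\<in>?B. x ^ card T) = real (card V) * x"
  proof -
    have "(\<Sum>T\<in>?B. x ^ card T) = (\<Sum>T\<in>?B. x)" by simp
    also have "\<dots> = real (card ?B) * x" by simp
    finally show ?thesis using n_subsets[OF assms(1), of 1] by simp
  qed
  ultimately have e: "(\<Sum>T\<in>?A. x ^ card T) = (1+x)^card V - real (card V) * x"
    using pow_sum[OF assms(1), of x] by simp
  have "(1+x)^card V \<le> exp x ^ card V"
    by (rule power_mono) (use assms in \<open>auto simp: exp_ge_add_one_self\<close>)
  also have "\<dots> = exp (real (card V) * x)" by (simp add: exp_of_nat_mult)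
  finally have "(\<Sum>T\<in>?A. x ^ card T) \<le> exp (real (card V) * x) - real (card V) * x" using e by simp
  also have "\<dots> \<le> exp ((real (card V) * x)^2)" using exp_aux assms by simp
  finally show ?thesis by (simp add: power_mult_distrib mult.commute)
qed

lemma gen_bound:
  fixes V :: "nat \<Rightarrow> 'a set" and x :: real
  assumes fin: "\<And>i. i \<in> {1..t} \<Longrightarrow> finite (V i)"
    and disj: "\<And>i j. i \<in> {1..t} \<Longrightarrow> j \<in> {1..t} \<Longrightarrow> i \<noteq> j \<Longrightarrow> V i \<inter> V j = {}"
    and x: "x \<ge> 0"
  shows "(\<Sum>S\<in>{S. S \<subseteq> (\<Union>i\<in>{1..t}. V i) \<and> (\<forall>i\<in>{1..t}. card (S \<inter> V i) \<noteq> 1)}. x ^ card S)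
     \<le> exp (x^2 * (\<Sum>i=1..t. real (card (V i)) ^ 2))"
  using fin disj
proof (induction t)
  case 0
  have "{S. S \<subseteq> (\<Union>i\<in>{1..0::nat}. V i) \<and> (\<forall>i\<in>{1..0::nat}. card (S \<inter> V i) \<noteq> 1)} = {{}}" by auto
  then show ?case by simp
next
  case (Suc t)
  let ?U = "\<Union>i\<in>{1..t}. V i"
  let ?A = "{S. S \<subseteq> ?U \<and> (\<forall>i\<in>{1..t}. card (S \<inter> V i) \<noteq> 1)}"
  let ?B = "{T. T \<subseteq> V (Suc t) \<and> card T \<noteq> 1}"
  let ?C = "{S. S \<subseteq> (\<Union>i\<in>{1..Suc t}. V i) \<and> (\<forall>i\<in>{1..Suc t}. card (S \<inter> V i) \<noteq> 1)}"
  have IH: "(\<Sum>S\<in>?A. x ^ card S) \<le> exp (x^2 * (\<Sum>i=1..t. real (card (V i)) ^ 2))"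
    using Suc.IH Suc.prems by auto
  have finU: "finite ?U" using Suc.prems by auto
  have finV: "finite (V (Suc t))" using Suc.prems by auto
  have finA: "finite ?A" by (rule finite_subset[of _ "Pow ?U"]) (use finU in auto)
  have finB: "finite ?B" by (rule finite_subset[of _ "Pow (V (Suc t))"]) (use finV in auto)
  have UV: "?U \<inter> V (Suc t) = {}" using Suc.prems(2) by fastforce
  have sub: "?C \<subseteq> (\<lambda>(A,T). A \<union> T) ` (?A \<times> ?B)"
  proof
    fix S assume S: "S \<in> ?C"
    have a: "S - V (Suc t) \<in> ?A"
    proof -
      have "S - V (Suc t) \<subseteq> ?U" using S by (auto simp: atLeastAtMostSuc_conv)
      moreover have "card ((S - V (Suc t)) \<inter> V i) \<noteq> 1" if "i \<in> {1..t}" for i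
      proof -
        have "V i \<inter> V (Suc t) = {}" using Suc.prems(2)[of i "Suc t"] that by auto
        then have "(S - V (Suc t)) \<inter> V i = S \<inter> V i" by blast
        then show ?thesis using S that by auto
      qed
      ultimately show ?thesis by auto
    qed
    have b: "S \<inter> V (Suc t) \<in> ?B" using S by auto
    have "S = (S - V (Suc t)) \<union> (S \<inter> V (Suc t))" by blast
    then show "S \<in> (\<lambda>(A,T). A \<union> T) ` (?A \<times> ?B)" using a b by (auto intro!: image_eqI[of _ _ "(S - V (Suc t), S \<inter> V (Suc t))"])
  qed
  have "(\<Sum>S\<in>?C. x ^ card S) \<le> (\<Sum>S\<in>(\<lambda>(A,T). A \<union> T) ` (?A \<times> ?B). x ^ card S)"
    by (rule sum_mono2) (use sub finA finB x in auto)
  also have "\<dots> \<le> (\<Sum>p\<in>?A \<times> ?B. ((\<lambda>S. x ^ card S) \<circ> (\<lambda>(A,T). A \<union> T)) p)"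
    by (rule sum_image_le) (use finA finB x in auto)
  also have "\<dots> = (\<Sum>p\<in>?A \<times> ?B. x ^ card (fst p) * x ^ card (snd p))"
  proof (rule sum.cong[OF refl])
    fix p assume p: "p \<in> ?A \<times> ?B"
    obtain A T where pAT: "p = (A,T)" by force
    have "A \<subseteq> ?U" "T \<subseteq> V (Suc t)" using p pAT by auto
    then have "A \<inter> T = {}" "finite A" "finite T" using UV finU finV by (auto intro: finite_subset)
    then have "card (A \<union> T) = card A + card T" by (simp add: card_Un_disjoint)
    then show "((\<lambda>S. x ^ card S) \<circ> (\<lambda>(A,T). A \<union> T)) p = x ^ card (fst p) * x ^ card (snd p)"
      using pAT by (simp add: power_add)
  qed
  also have "\<dots> = (\<Sum>S\<in>?A. x ^ card S) * (\<Sum>T\<in>?B. x ^ card T)"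
    by (simp add: sum_product sum.cartesian_product case_prod_beta)
  also have "\<dots> \<le> exp (x^2 * (\<Sum>i=1..t. real (card (V i)) ^ 2)) * exp (x^2 * real (card (V (Suc t)))^2)"
    by (rule mult_mono[OF IH block_sum[OF finV x]]) (use x in \<open>auto intro: sum_nonneg\<close>)
  also have "\<dots> = exp (x^2 * (\<Sum>i=1..Suc t. real (card (V i)) ^ 2))"
    by (simp add: exp_add[symmetric] algebra_simps)
  finally show ?case .
qed

theorem lemma6p4:
  fixes V :: "nat \<Rightarrow> 'a set" and t :: nat and l :: nat
  assumes fin: "\<And>i. i \<in> {1..t} \<Longrightarrow> finite (V i)"
    and card2: "\<And>i. i \<in> {1..t} \<Longrightarrow> card (V i) \<ge> 2"
    and disj: "\<And>i j. i \<in> {1..t} \<Longrightarrow> j \<in> {1..t} \<Longrightarrow> i \<noteq> j \<Longrightarrow> V i \<inter> V j = {}"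
    and l2: "l \<ge> 2"
  shows "real (card {S. S \<subseteq> (\<Union>i\<in>{1..t}. V i) \<and> card S = l \<and>
                       (\<forall>i\<in>{1..t}. card (S \<inter> V i) \<noteq> 1)})
         \<le> (20 / real l * (\<Sum>i=1..t. real (card (V i)) ^ 2)) powr (real l / 2)"
proof (cases "t = 0")
  case True
  then have e: "{S. S \<subseteq> (\<Union>i\<in>{1..t}. V i) \<and> card S = l \<and>
                       (\<forall>i\<in>{1..t}. card (S \<inter> V i) \<noteq> 1)} = {}" using l2 by auto
  show ?thesis unfolding e by simp
next
  case False
  let ?N = "{S. S \<subseteq> (\<Union>i\<in>{1..t}. V i) \<and> card S = l \<and> (\<forall>i\<in>{1..t}. card (S \<inter> V i) \<noteq> 1)}"
  let ?A = "{S. S \<subseteq> (\<Union>i\<in>{1..t}. V i) \<and> (\<forall>i\<in>{1..t}. card (S \<inter> V i) \<noteq> 1)}"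
  define Q where "Q = (\<Sum>i=1..t. real (card (V i)) ^ 2)"
  have "real (card (V 1)) ^ 2 \<le> Q" unfolding Q_def
    by (rule member_le_sum) (use False in auto)
  moreover have "real (card (V 1)) ^ 2 > 0" using card2[of 1] False by auto
  ultimately have Qpos: "Q > 0" by linarith
  have lpos: "real l > 0" using l2 by simp
  define x where "x = sqrt (real l / (2 * Q))"
  have x0: "x > 0" unfolding x_def using Qpos lpos by simp
  have x2: "x^2 = real l / (2*Q)" unfolding x_def using Qpos lpos by simp
  have finU: "finite (\<Union>i\<in>{1..t}. V i)" using fin by auto
  have finA: "finite ?A" by (rule finite_subset[of _ "Pow (\<Union>i\<in>{1..t}. V i)"]) (use finU in auto)
  have "real (card ?N) * x ^ l = (\<Sum>S\<in>?N. x ^ card S)" by simp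
  also have "\<dots> \<le> (\<Sum>S\<in>?A. x ^ card S)"
    by (rule sum_mono2) (use finA x0 in auto)
  also have "\<dots> \<le> exp (x^2 * Q)" unfolding Q_def
    by (rule gen_bound) (use fin disj x0 in auto)
  also have "\<dots> = exp (real l / 2)" using x2 Qpos by simp
  finally have N1: "real (card ?N) * x ^ l \<le> exp (real l / 2)" .
  have xl: "x ^ l = (real l / (2*Q)) powr (real l / 2)"
  proof -
    have "x ^ l = x powr real l" using x0 by (simp add: powr_realpow)
    also have "\<dots> = (x powr 2) powr (real l / 2)" by (simp add: powr_powr)
    also have "x powr 2 = x^2" using x0 by (simp add: powr_realpow)
    finally show ?thesis using x2 by simp
  qed
  have xlpos: "x ^ l > 0" using x0 by simp
  have "real (card ?N) \<le> exp (real l / 2) / x ^ l" using N1 xlpos by (simp add: field_simps)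
  also have "exp (real l / 2) = exp 1 powr (real l / 2)" by (simp add: powr_def)
  also have "\<dots> / x ^ l = (exp 1 / (real l / (2*Q))) powr (real l / 2)"
    unfolding xl using Qpos lpos by (simp add: powr_divide powr_mult)
  also have "\<dots> \<le> (20 / real l * Q) powr (real l / 2)"
  proof (rule powr_mono2)
    have "exp (1::real) \<le> 3" using exp_le by simp
    then have "exp 1 * (2 * Q) \<le> 20 * Q" using Qpos by simp
    then show "exp 1 / (real l / (2 * Q)) \<le> 20 / real l * Q" using Qpos lpos by (simp add: field_simps)
  qed (use Qpos lpos in auto)
  finally show ?thesis unfolding Q_def .
qed

end
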